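(* Let $n>1$ agents $\mathcal N=\{1,\dots,n\}$ communicate over a time-varying directed graph $\mathbb N(t)=(\mathcal N,\mathcal E(t))$, $t=1,2,\dots$, where $(i,j)\in\mathcal E(t)$ means agent $i$ can send information to agent $j$ at time $t$. Let $o_i(t)$ be the out-degree of $i$ in $\mathbb N(t)$ and $\mathcal N_i^{\mathrm{in}}(t)=\{j:(j,i)\in\mathcal E(t)\}$ its set of in-neighbors. For each agent $i$, let $x_i(1),x_i(2),\dots$ be i.i.d. samples of a random variable $X_i$ with $|X_i|\le K$ almost surely; put $\bar x_i=E[X_i]$, $\bar x=\frac1n\sum_i\bar x_i$, and $z_i(t)=\frac1t\sum_{\tau=1}^t x_i(\tau)$. Each agent initializes $y_i(1)=x_i(1)$, $v_i(1)=1$, and for $t=1,2,\dots$ updates $$\mu_i(t+1)=\frac{y_i(t)}{1+o_i(t)}+\sum_{j\in\mathcal N_i^{\mathrm{in}}(t)}\frac{y_j(t)}{1+o_j(t)},\qquad v_i(t+1)=\frac{v_i(t)}{1+o_i(t)}+\sum_{j\in\mathcal N_i^{\mathrm{in}}(t)}\frac{v_j(t)}{1+o_j(t)},$$ $$y_i(t+1)=\mu_i(t+1)+z_i(t+1)-z_i(t).$$ Assume: (i) for every $t$ there is a symmetric stochastic matrix $W(t)$ with positive diagonal entries and $w_{ij}(t)=0$ whenever $i\neq j$ and $(i,j)\notin\mathcal E(t)$; (ii) $\{\mathbb N(t)\}$ is repeatedly jointly strongly connected: there is a positive integer $r$ such that for each $k\ge0$ the union of $\mathbb N(rk+1),\dots,\mathbb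 N(r(k+1))$ is strongly connected. Then $\lim_{t\to\infty}\mu_i(t)/v_i(t)=\bar x$ for all $i$ almost surely. Moreover, the sequences $\{\mu_i(t)/v_i(t)\}$ reach consensus at rate $O(1/t)$ with high probability: there is a constant $C$ such that, with probability tending to $1$ as $t\to\infty$, $\max_i\mu_i(t)/v_i(t)-\min_j\mu_j(t)/v_j(t)\le C/t$.
   Context: The union of directed graphs on the same vertex set has as edge set the union of their edge sets; a directed graph is strongly connected if there is a directed path between each ordered pair of distinct vertices. "With high probability" means with probability tending to $1$ as $t\to\infty$. Each agent sends $y_i(t)/(1+o_i(t))$ and $v_i(t)/(1+o_i(t))$ to its out-neighbors. *)

theory Defs
  imports "HOL-Probability.Probability"
begin

text \<open>Agents are 0,...,n-1. A time-varying digraph is E :: nat => (nat * nat) set,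
  (i,j) in E t meaning i can send to j at time t. Self-loops are ignored.\<close>

definition outdeg :: "nat \<Rightarrow> (nat \<Rightarrow> (nat \<times> nat) set) \<Rightarrow> nat \<Rightarrow> nat \<Rightarrow> nat" where
  "outdeg n E t i = card {j. j < n \<and> j \<noteq> i \<and> (i, j) \<in> E t}"

definition in_nbrs :: "nat \<Rightarrow> (nat \<Rightarrow> (nat \<times> nat) set) \<Rightarrow> nat \<Rightarrow> nat \<Rightarrow> nat set" where
  "in_nbrs n E t i = {j. j < n \<and> j \<noteq> i \<and> (j, i) \<in> E t}"

definition push :: "nat \<Rightarrow> (nat \<Rightarrow> (nat \<times> nat) set) \<Rightarrow> nat \<Rightarrow> (nat \<Rightarrow> real) \<Rightarrow> nat \<Rightarrow> real" where
  "push n E t f i = f i / (1 + real (outdeg n E t i))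
     + (\<Sum>j\<in>in_nbrs n E t i. f j / (1 + real (outdeg n E t j)))"

definition zavg :: "(nat \<Rightarrow> nat \<Rightarrow> real) \<Rightarrow> nat \<Rightarrow> nat \<Rightarrow> real" where
  "zavg xs i t = (\<Sum>\<tau>=1..t. xs i \<tau>) / real t"

text \<open>yv ... t = (y(t), v(t)) for t >= 1 (value at t = 0 unused).\<close>
fun yv :: "nat \<Rightarrow> (nat \<Rightarrow> (nat \<times> nat) set) \<Rightarrow> (nat \<Rightarrow> nat \<Rightarrow> real) \<Rightarrow> nat
           \<Rightarrow> (nat \<Rightarrow> real) \<times> (nat \<Rightarrow> real)" where
  "yv n E xs 0 = (\<lambda>i. 0, \<lambda>i. 0)"
| "yv n E xs (Suc 0) = (\<lambda>i. xs i 1, \<lambda>i. 1)"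
| "yv n E xs (Suc (Suc s)) =
     (let y = fst (yv n E xs (Suc s)); v = snd (yv n E xs (Suc s)); t = Suc s in
      (\<lambda>i. push n E t y i + zavg xs i (Suc t) - zavg xs i t, \<lambda>i. push n E t v i))"

text \<open>mu_i(t) for t >= 2: mu_i(t+1) = push of y(t) at time t.\<close>
definition mu :: "nat \<Rightarrow> (nat \<Rightarrow> (nat \<times> nat) set) \<Rightarrow> (nat \<Rightarrow> nat \<Rightarrow> real) \<Rightarrow> nat \<Rightarrow> nat \<Rightarrow> real" where
  "mu n E xs t i = push n E (t - 1) (fst (yv n E xs (t - 1))) i"

definition vw :: "nat \<Rightarrow> (nat \<Rightarrow> (nat \<times> nat) set) \<Rightarrow> (nat \<Rightarrow> nat \<Rightarrow> real) \<Rightarrow> nat \<Rightarrow> nat \<Rightarrow> real" where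
  "vw n E xs t i = snd (yv n E xs t) i"

definition compatible_weights :: "nat \<Rightarrow> (nat \<times> nat) set \<Rightarrow> bool" where
  "compatible_weights n Et \<longleftrightarrow> (\<exists>W :: nat \<Rightarrow> nat \<Rightarrow> real.
      (\<forall>i<n. \<forall>j<n. W i j = W j i) \<and>
      (\<forall>i<n. \<forall>j<n. 0 \<le> W i j) \<and>
      (\<forall>i<n. (\<Sum>j<n. W i j) = 1) \<and>
      (\<forall>i<n. 0 < W i i) \<and>
      (\<forall>i<n. \<forall>j<n. i \<noteq> j \<and> (i, j) \<notin> Et \<longrightarrow> W i j = 0))"

definition strongly_connected :: "nat \<Rightarrow> (nat \<times> nat) set \<Rightarrow> bool" where
  "strongly_connected n Ed \<longleftrightarrow> (\<forall>i<n. \<forall>j<n. i \<noteq> j \<longrightarrow> (i, j) \<in> (Ed \<inter> ({..<n} \<times> {..<n}))\<^sup>+)"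

definition repeatedly_jointly_strongly_connected :: "nat \<Rightarrow> (nat \<Rightarrow> (nat \<times> nat) set) \<Rightarrow> bool" where
  "repeatedly_jointly_strongly_connected n E \<longleftrightarrow> (\<exists>r::nat. r > 0 \<and>
      (\<forall>k::nat. strongly_connected n (\<Union>t\<in>{r*k+1..r*(k+1)}. E t)))"

end

theory Submission
  imports Defs
begin


lemma slln_bounded:
  fixes X :: "nat \<Rightarrow> 'a \<Rightarrow> real"
  assumes P: "prob_space M"
    and ind: "prob_space.indep_vars M (\<lambda>_. borel) X {1..}"
    and dis: "\<And>\<tau>. \<tau> \<ge> 1 \<Longrightarrow> distr M borel (X \<tau>) = distr M borel (X 1)"
    and bnd: "\<And>\<tau>. \<tau> \<ge> 1 \<Longrightarrow> AE \<omega> in M. \<bar>X \<tau> \<omega>\<bar> \<le> K"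
  shows "AE \<omega> in M. ((\<lambda>t. (\<Sum>\<tau>=1..t. X \<tau> \<omega>) / real t) \<longlongrightarrow> prob_space.expectation M (X 1)) sequentially"
proof -
  interpret prob_space M by (rule P)
  define a where "a = -(\<bar>K\<bar>+1)"
  define b where "b = \<bar>K\<bar>+1"
  define mu where "mu = expectation (X 1)"
  have ab: "a < b" unfolding a_def b_def by simp
  have rv: "random_variable borel (X i)" if "i \<ge> 1" for i using ind that unfolding indep_vars_def by auto
  have rv1: "random_variable borel (X 1)" by (rule rv) simp
  have AE1: "AE x in M. X 1 x \<in> {a..b}"
  proof -
    have "AE x in M. \<bar>X 1 x\<bar> \<le> K" using bnd[of 1] by simp
    then show ?thesis by eventually_elim (auto simp: a_def b_def)
  qed
  have hoeff: "prob {x\<in>space M. \<bar>(\<Sum>i\<in>{1..t}. X i x) / real t - mu\<bar> \<ge> e} \<le>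
               2 * exp (-2 * real t * e\<^sup>2 / (b - a)\<^sup>2)" if "t \<ge> 1" "e \<ge> 0" for t e
  proof -
    interpret H: iid_interval_bounded_random_variables M "{1..t}" X "X 1" a b
    proof (intro iid_interval_bounded_random_variables.intro iid_interval_bounded_random_variables_axioms.intro)
      show "prob_space M" by (rule P)
      show "finite {1..t}" by simp
      show "indep_vars (\<lambda>_. borel) X {1..t}" by (rule indep_vars_subset[OF ind]) auto
      show "distr M borel (X i) = distr M borel (X 1)" if "i \<in> {1..t}" for i by (rule dis) (use that in simp)
      show "random_variable borel (X 1)" by (rule rv1)
      show "AE x in M. X 1 x \<in> {a..b}" by (rule AE1)
    qed
    interpret H2: Hoeffding_ineq_iid M "{1..t}" X "X 1" a b mu by unfold_locales (simp add: mu_def)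
    have "{1..t} \<noteq> {}" using that by simp
    from H2.Hoeffding_ineq_abs_ge'[OF that(2) ab this] show ?thesis by simp
  qed
  have ev: "AE \<omega> in M. eventually (\<lambda>t. \<bar>(\<Sum>\<tau>=1..t. X \<tau> \<omega>) / real t - mu\<bar> < e) sequentially"
    if e: "e > 0" for e
  proof -
    define A where "A t = (if t = 0 then {} else {x\<in>space M. \<bar>(\<Sum>i\<in>{1..t}. X i x) / real t - mu\<bar> \<ge> e})" for t
    define q where "q = exp (-2 * e\<^sup>2 / (b - a)\<^sup>2)"
    have q: "0 < q" "q < 1" using e ab unfolding q_def by auto
    have Ameas: "A t \<in> sets M" for t
    proof (cases "t = 0")
      case False
      have "(\<lambda>x. (\<Sum>i\<in>{1..t}. X i x)) \<in> borel_measurable M"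
        by (intro borel_measurable_sum) (use rv in auto)
      then have "{x\<in>space M. \<bar>(\<Sum>i\<in>{1..t}. X i x) / real t - mu\<bar> \<ge> e} \<in> sets M" by measurable
      then show ?thesis using False unfolding A_def by simp
    qed (simp add: A_def)
    have Ale: "measure M (A t) \<le> 2 * q ^ t" for t
    proof (cases "t = 0")
      case False
      have "exp (-2 * real t * e\<^sup>2 / (b - a)\<^sup>2) = q ^ t"
        unfolding q_def by (simp add: exp_of_nat_mult[symmetric] algebra_simps)
      then show ?thesis using hoeff[of t e] False e unfolding A_def by simp
    qed (simp add: A_def)
    have "summable (\<lambda>t. measure M (A t))"
    proof (rule summable_comparison_test)
      show "\<exists>N. \<forall>t\<ge>N. norm (measure M (A t)) \<le> 2 * q ^ t" using Ale by auto
      show "summable (\<lambda>t. 2 * q ^ t)" using q by (intro summable_mult summable_geometric) auto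
    qed
    from borel_cantelli_AE1[OF Ameas _ this]
    have "AE x in M. eventually (\<lambda>t. x \<in> space M - A t) sequentially" by (simp add: emeasure_eq_measure)
    then show ?thesis
    proof eventually_elim
      case (elim x)
      from elim have "eventually (\<lambda>t. t \<noteq> 0 \<and> x \<in> space M - A t) sequentially"
        by (intro eventually_conj) (auto simp: eventually_sequentially intro: exI[of _ 1])
      then show ?case by eventually_elim (auto simp: A_def)
    qed
  qed
  have "AE \<omega> in M. \<forall>m::nat. eventually (\<lambda>t. \<bar>(\<Sum>\<tau>=1..t. X \<tau> \<omega>) / real t - mu\<bar> < 1 / real (Suc m)) sequentially"
    by (subst AE_all_countable) (intro allI ev, simp)
  then show ?thesis
  proof eventually_elim
    case (elim \<omega>)
    show ?case unfolding mu_def[symmetric]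
    proof (rule tendstoI)
      fix e :: real assume "e > 0"
      then obtain m where m: "1 / real (Suc m) < e"
        by (metis nat_approx_posE)
      from elim[rule_format, of m] show "eventually (\<lambda>t. dist ((\<Sum>\<tau>=1..t. X \<tau> \<omega>) / real t) mu < e) sequentially"
        by eventually_elim (use m in \<open>auto simp: dist_real_def\<close>)
    qed
  qed
qed



definition Am :: "nat \<Rightarrow> (nat \<Rightarrow> (nat \<times> nat) set) \<Rightarrow> nat \<Rightarrow> nat \<Rightarrow> nat \<Rightarrow> real" where
  "Am n E t i j = (if j < n \<and> (j = i \<or> j \<in> in_nbrs n E t i) then 1 / (1 + real (outdeg n E t j)) else 0)"

lemma in_nbrs_sub: "in_nbrs n E t i \<subseteq> {..<n} - {i}"
  unfolding in_nbrs_def by auto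

lemma push_Am:
  assumes "i < n"
  shows "push n E t f i = (\<Sum>j<n. Am n E t i j * f j)"
proof -
  have "(\<Sum>j<n. Am n E t i j * f j) = (\<Sum>j\<in>{j\<in>{..<n}. j = i \<or> j \<in> in_nbrs n E t i}. f j / (1 + real (outdeg n E t j)))"
  proof -
    have "(\<Sum>j<n. Am n E t i j * f j) = (\<Sum>j<n. if j = i \<or> j \<in> in_nbrs n E t i then f j / (1 + real (outdeg n E t j)) else 0)"
      unfolding Am_def by (intro sum.cong) auto
    also have "\<dots> = (\<Sum>j\<in>{j\<in>{..<n}. j = i \<or> j \<in> in_nbrs n E t i}. f j / (1 + real (outdeg n E t j)))"
      by (rule sum.inter_filter[symmetric]) simp
    finally show ?thesis .
  qed
  also have "{j\<in>{..<n}. j = i \<or> j \<in> in_nbrs n E t i} = insert i (in_nbrs n E t i)"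
    using assms in_nbrs_sub[of n E t i] by auto
  also have "(\<Sum>j\<in>insert i (in_nbrs n E t i). f j / (1 + real (outdeg n E t j))) = push n E t f i"
    unfolding push_def using in_nbrs_sub[of n E t i] by (subst sum.insert) (auto intro: finite_subset)
  finally show ?thesis by simp
qed

lemma Am_nonneg: "0 \<le> Am n E t i j"
  unfolding Am_def by auto

lemma Am_colsum:
  assumes "j < n"
  shows "(\<Sum>i<n. Am n E t i j) = 1"
proof -
  have "(\<Sum>i<n. Am n E t i j) = (\<Sum>i<n. if j = i \<or> j \<in> in_nbrs n E t i then 1 / (1 + real (outdeg n E t j)) else 0)"
    unfolding Am_def using assms by (intro sum.cong) auto
  also have "\<dots> = (\<Sum>i\<in>{i\<in>{..<n}. j = i \<or> j \<in> in_nbrs n E t i}. 1 / (1 + real (outdeg n E t j)))"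
    by (rule sum.inter_filter[symmetric]) simp
  also have "{i\<in>{..<n}. j = i \<or> j \<in> in_nbrs n E t i} = insert j {i. i < n \<and> i \<noteq> j \<and> (j, i) \<in> E t}"
    using assms unfolding in_nbrs_def by auto
  also have "card (insert j {i. i < n \<and> i \<noteq> j \<and> (j, i) \<in> E t}) = 1 + outdeg n E t j"
    unfolding outdeg_def by (subst card_insert_disjoint) auto
  then have "(\<Sum>i\<in>insert j {i. i < n \<and> i \<noteq> j \<and> (j, i) \<in> E t}. 1 / (1 + real (outdeg n E t j))) = 1"
    by (simp add: add_pos_nonneg)
  finally show ?thesis .
qed

lemma outdeg_le: "i < n \<Longrightarrow> outdeg n E t i \<le> n - 1"
proof -
  assume "i < n"
  have "{j. j < n \<and> j \<noteq> i \<and> (i, j) \<in> E t} \<subseteq> {..<n} - {i}" by auto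
  then have "outdeg n E t i \<le> card ({..<n} - {i})" unfolding outdeg_def by (intro card_mono) auto
  then show ?thesis using \<open>i < n\<close> by simp
qed

lemma Am_lb:
  assumes "i < n" "j < n" "j = i \<or> (j \<noteq> i \<and> (j, i) \<in> E t)"
  shows "1 / real n \<le> Am n E t i j"
proof -
  have "j = i \<or> j \<in> in_nbrs n E t i" using assms unfolding in_nbrs_def by auto
  then have "Am n E t i j = 1 / (1 + real (outdeg n E t j))" using assms unfolding Am_def by auto
  moreover have "1 + real (outdeg n E t j) \<le> real n" using outdeg_le[OF assms(2), of E t] assms by linarith
  ultimately show ?thesis by (simp add: frac_le)
qed

lemma sum_push: "(\<Sum>i<n. push n E t f i) = (\<Sum>j<n. f j)"
proof -
  have "(\<Sum>i<n. push n E t f i) = (\<Sum>i<n. \<Sum>j<n. Am n E t i j * f j)" by (simp add: push_Am)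
  also have "\<dots> = (\<Sum>j<n. (\<Sum>i<n. Am n E t i j) * f j)" by (subst sum.swap) (simp add: sum_distrib_right)
  also have "\<dots> = (\<Sum>j<n. f j)" by (simp add: Am_colsum)
  finally show ?thesis .
qed

lemma crossing:
  assumes "(x, y) \<in> S\<^sup>+" "x \<in> R" "y \<notin> R"
  shows "\<exists>a b. (a, b) \<in> S \<and> a \<in> R \<and> b \<notin> R"
  using assms
proof (induction rule: trancl_induct)
  case (base y) then show ?case by auto
next
  case (step y z) then show ?case by (cases "y \<in> R") auto
qed

lemma reach:
  fixes g :: "nat \<Rightarrow> nat \<Rightarrow> real" and \<eta> :: real
  assumes r: "r > 0" and sc: "\<And>k. strongly_connected n (\<Union>t\<in>{r*k+1..r*(k+1)}. E t)"
    and eta: "0 < \<eta>" "\<eta> \<le> 1" and s: "s \<ge> 1"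
    and nonneg: "\<And>\<tau> i. \<tau> \<ge> s \<Longrightarrow> i < n \<Longrightarrow> 0 \<le> g \<tau> i"
    and diag: "\<And>\<tau> i. \<tau> \<ge> s \<Longrightarrow> i < n \<Longrightarrow> \<eta> * g \<tau> i \<le> g (Suc \<tau>) i"
    and edge: "\<And>\<tau> i l. \<tau> \<ge> s \<Longrightarrow> i < n \<Longrightarrow> l < n \<Longrightarrow> l \<noteq> i \<Longrightarrow> (l, i) \<in> E \<tau> \<Longrightarrow> \<eta> * g \<tau> l \<le> g (Suc \<tau>) i"
    and ij: "i < n" "j < n"
  shows "\<eta> ^ (r * n) * g s j \<le> g (s + r * n) i"
proof -
  define R where "R \<tau> = {i. i < n \<and> \<eta> ^ (\<tau> - s) * g s j \<le> g \<tau> i}" for \<tau>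
  have Rsub: "R \<tau> \<subseteq> {..<n}" for \<tau> unfolding R_def by auto
  have fin: "finite (R \<tau>)" for \<tau> using Rsub finite_subset by blast
  have step1: "R \<tau> \<subseteq> R (Suc \<tau>)" if "\<tau> \<ge> s" for \<tau>
  proof
    fix i assume "i \<in> R \<tau>"
    then have i: "i < n" "\<eta> ^ (\<tau> - s) * g s j \<le> g \<tau> i" unfolding R_def by auto
    have "\<eta> ^ (Suc \<tau> - s) * g s j = \<eta> * (\<eta> ^ (\<tau> - s) * g s j)" using that by (simp add: Suc_diff_le)
    also have "\<dots> \<le> \<eta> * g \<tau> i" using i eta by (intro mult_left_mono) auto
    also have "\<dots> \<le> g (Suc \<tau>) i" using diag that i by auto
    finally show "i \<in> R (Suc \<tau>)" using i unfolding R_def by auto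
  qed
  have mono: "R \<tau> \<subseteq> R \<tau>'" if "s \<le> \<tau>" "\<tau> \<le> \<tau>'" for \<tau> \<tau>'
    using that(2)
  proof (induction \<tau>' rule: dec_induct)
    case (step m) then show ?case using step1[of m] that by auto
  qed simp
  have edge1: "i \<in> R (Suc \<tau>)" if "\<tau> \<ge> s" "l \<in> R \<tau>" "i < n" "l \<noteq> i" "(l, i) \<in> E \<tau>" for \<tau> l i
  proof -
    have l: "l < n" "\<eta> ^ (\<tau> - s) * g s j \<le> g \<tau> l" using that unfolding R_def by auto
    have "\<eta> ^ (Suc \<tau> - s) * g s j = \<eta> * (\<eta> ^ (\<tau> - s) * g s j)" using that by (simp add: Suc_diff_le)
    also have "\<dots> \<le> \<eta> * g \<tau> l" using l eta by (intro mult_left_mono) auto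
    also have "\<dots> \<le> g (Suc \<tau>) i" using edge that l by auto
    finally show ?thesis using that unfolding R_def by auto
  qed
  have js: "j \<in> R s" unfolding R_def using ij by simp
  have grow: "card (R (r * k + 1)) < card (R (r * (k + 1) + 1))"
    if k: "r * k + 1 \<ge> s" and a0: "a0 \<in> R (r * k + 1)" and b0: "b0 < n" "b0 \<notin> R (r * k + 1)" for k a0 b0
  proof -
    let ?U = "\<Union>t\<in>{r*k+1..r*(k+1)}. E t"
    have a0n: "a0 < n" using a0 Rsub by auto
    have "a0 \<noteq> b0" using a0 b0 by auto
    then have "(a0, b0) \<in> (?U \<inter> ({..<n} \<times> {..<n}))\<^sup>+" using sc[of k] a0n b0 unfolding strongly_connected_def by auto
    from crossing[OF this a0 b0(2)] obtain a b where ab: "(a, b) \<in> ?U \<inter> ({..<n} \<times> {..<n})"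
      "a \<in> R (r * k + 1)" "b \<notin> R (r * k + 1)" by blast
    then obtain t where t: "t \<in> {r*k+1..r*(k+1)}" "(a, b) \<in> E t" "b < n" by auto
    have "a \<in> R t" using mono[of "r*k+1" t] k t ab by auto
    then have "b \<in> R (Suc t)" using edge1[of t a b] t k ab by auto
    moreover have "R (Suc t) \<subseteq> R (r * (k + 1) + 1)" using mono[of "Suc t" "r * (k + 1) + 1"] t k by auto
    moreover have "R (r * k + 1) \<subseteq> R (r * (k + 1) + 1)" using mono[of "r*k+1" "r * (k + 1) + 1"] k by auto
    ultimately have "insert b (R (r * k + 1)) \<subseteq> R (r * (k + 1) + 1)" by auto
    then have "card (insert b (R (r * k + 1))) \<le> card (R (r * (k + 1) + 1))" using fin by (intro card_mono) auto
    then show ?thesis using ab fin by simp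
  qed
  define k0 where "k0 = (s - 1) div r + 1"
  have k0a: "r * k0 \<ge> s"
  proof -
    have "s - 1 = r * ((s - 1) div r) + (s - 1) mod r" by simp
    moreover have "(s - 1) mod r < r" using r by simp
    ultimately have "s - 1 < r * ((s - 1) div r) + r" by linarith
    then have "s - 1 < r * ((s - 1) div r + 1)" by (simp add: algebra_simps)
    then show ?thesis unfolding k0_def using s by linarith
  qed
  have k0b: "r * k0 \<le> s - 1 + r"
  proof -
    have "r * ((s - 1) div r) \<le> s - 1" by simp
    then show ?thesis unfolding k0_def by (simp add: algebra_simps)
  qed
  have n1: "n \<ge> 1" using ij by simp
  have cardm: "min n (m + 1) \<le> card (R (r * (k0 + m) + 1))" for m
  proof (induction m)
    case 0
    have "j \<in> R (r * k0 + 1)" using mono[of s "r * k0 + 1"] js k0a by auto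
    then have "card (R (r * k0 + 1)) \<ge> 1" using fin by (metis One_nat_def Suc_leI card_gt_0_iff empty_iff)
    then show ?case by simp
  next
    case (Suc m)
    let ?k = "k0 + m"
    have sk: "r * ?k + 1 \<ge> s" using k0a by (simp add: algebra_simps)
    have monok: "R (r * ?k + 1) \<subseteq> R (r * (?k + 1) + 1)" using mono sk by simp
    show ?case
    proof (cases "R (r * ?k + 1) = {..<n}")
      case True
      then have "R (r * (?k + 1) + 1) = {..<n}" using monok Rsub by blast
      then show ?thesis by (simp add: algebra_simps)
    next
      case False
      then obtain b0 where b0: "b0 < n" "b0 \<notin> R (r * ?k + 1)" using Rsub by blast
      have "R (r * ?k + 1) \<noteq> {}"
      proof
        assume "R (r * ?k + 1) = {}"
        then show False using Suc n1 by simp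
      qed
      then obtain a0 where "a0 \<in> R (r * ?k + 1)" by blast
      from grow[OF sk this b0] Suc show ?thesis by (simp add: algebra_simps)
    qed
  qed
  have "card (R (r * (k0 + (n - 1)) + 1)) \<ge> n" using cardm[of "n - 1"] n1 by simp
  then have "R (r * (k0 + (n - 1)) + 1) = {..<n}"
    using Rsub by (metis card_lessThan card_subset_eq finite_lessThan le_antisym card_mono)
  moreover have "r * (k0 + (n - 1)) + 1 \<le> s + r * n"
  proof -
    have e1: "r * (k0 + (n - 1)) = r * k0 + r * (n - 1)" by (simp add: algebra_simps)
    have e2: "r * (n - 1) + r = r * n" using n1 by (metis Suc_diff_1 less_le_trans mult_Suc_right zero_less_one add.commute)
    show ?thesis using e1 e2 k0b s by linarith
  qed
  moreover have "s \<le> r * (k0 + (n - 1)) + 1"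
  proof -
    have "r * k0 \<le> r * (k0 + (n - 1))" by simp
    then show ?thesis using k0a by linarith
  qed
  ultimately have "R (s + r * n) = {..<n}" using mono[of "r * (k0 + (n - 1)) + 1" "s + r * n"] Rsub by auto
  then have "i \<in> R (s + r * n)" using ij by auto
  then show ?thesis unfolding R_def by simp
qed



lemma supersol:
  fixes g :: "nat \<Rightarrow> nat \<Rightarrow> real" and p :: "nat \<Rightarrow> nat \<Rightarrow> nat \<Rightarrow> real"
  assumes r: "r > 0" and sc: "\<And>k. strongly_connected n (\<Union>t\<in>{r*k+1..r*(k+1)}. E t)"
    and eta: "0 < \<eta>" "\<eta> \<le> 1" and s: "s \<ge> 1"
    and sup: "\<And>\<tau> i. \<tau> \<ge> s \<Longrightarrow> i < n \<Longrightarrow> (\<Sum>j<n. p \<tau> i j * g \<tau> j) \<le> g (Suc \<tau>) i"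
    and pnn: "\<And>\<tau> i j. \<tau> \<ge> s \<Longrightarrow> i < n \<Longrightarrow> j < n \<Longrightarrow> 0 \<le> p \<tau> i j"
    and plb: "\<And>\<tau> i l. \<tau> \<ge> s \<Longrightarrow> i < n \<Longrightarrow> l < n \<Longrightarrow> l = i \<or> (l \<noteq> i \<and> (l, i) \<in> E \<tau>) \<Longrightarrow> \<eta> \<le> p \<tau> i l"
    and g0: "\<And>i. i < n \<Longrightarrow> 0 \<le> g s i"
    and ij: "i < n" "j < n"
  shows "\<eta> ^ (r * n) * g s j \<le> g (s + r * n) i"
proof -
  have nn: "0 \<le> g \<tau> i" if "\<tau> \<ge> s" "i < n" for \<tau> i
    using that(1) that(2)
  proof (induction \<tau> arbitrary: i rule: dec_induct)
    case base then show ?case using g0 by simp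
  next
    case (step m)
    have "0 \<le> (\<Sum>j<n. p m i j * g m j)" using step pnn by (intro sum_nonneg mult_nonneg_nonneg) auto
    also have "\<dots> \<le> g (Suc m) i" using sup step by auto
    finally show ?case .
  qed
  have single: "\<eta> * g \<tau> l \<le> g (Suc \<tau>) i"
    if "\<tau> \<ge> s" "i < n" "l < n" "l = i \<or> (l \<noteq> i \<and> (l, i) \<in> E \<tau>)" for \<tau> i l
  proof -
    have "\<eta> * g \<tau> l \<le> p \<tau> i l * g \<tau> l" using plb[OF that] nn[OF that(1,3)] by (intro mult_right_mono) auto
    also have "\<dots> \<le> (\<Sum>j<n. p \<tau> i j * g \<tau> j)"
      using that pnn nn by (intro member_le_sum[of l "{..<n}" "\<lambda>j. p \<tau> i j * g \<tau> j"]) auto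
    also have "\<dots> \<le> g (Suc \<tau>) i" using sup that by auto
    finally show ?thesis .
  qed
  show ?thesis
    by (rule reach[OF r sc eta s]) (use nn single ij in auto)
qed

definition rateT :: "real \<Rightarrow> nat \<Rightarrow> nat" where
  "rateT \<gamma> L = nat \<lceil>2 * real L / \<gamma>\<rceil> + L + 1"

definition rateC :: "real \<Rightarrow> nat \<Rightarrow> real \<Rightarrow> real \<Rightarrow> real \<Rightarrow> real" where
  "rateC \<gamma> L a b0 b1 = max (2 * a / \<gamma>) ((b0 + b1 * real (rateT \<gamma> L)) * real (rateT \<gamma> L))"

lemma rate:
  fixes D :: "nat \<Rightarrow> real"
  assumes g: "0 < \<gamma>" "\<gamma> \<le> 1" and a: "a \<ge> 0" and b: "b0 \<ge> 0" "b1 \<ge> 0"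
    and rec: "\<And>s. s \<ge> 1 \<Longrightarrow> D (s + L) \<le> (1 - \<gamma>) * D s + a / real s"
    and bd: "\<And>t. t \<ge> 1 \<Longrightarrow> D t \<le> b0 + b1 * real t"
    and t: "t \<ge> 1" and L: "L \<ge> 1"
  shows "D t \<le> rateC \<gamma> L a b0 b1 / real t"
  using t
proof (induction t rule: less_induct)
  case (less t)
  define T where "T = rateT \<gamma> L"
  define C where "C = rateC \<gamma> L a b0 b1"
  have C1: "2 * a / \<gamma> \<le> C" and C2: "(b0 + b1 * real T) * real T \<le> C"
    unfolding C_def rateC_def T_def by auto
  have TL: "T \<ge> L + 1" unfolding T_def rateT_def by simp
  have T2: "real T \<ge> 2 * real L / \<gamma>" unfolding T_def rateT_def by linarith
  show ?case
  proof (cases "t < T")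
    case True
    have "D t \<le> b0 + b1 * real t" using bd less by auto
    also have "\<dots> \<le> b0 + b1 * real T" using True b by (intro add_left_mono mult_left_mono) auto
    also have "\<dots> = (b0 + b1 * real T) * real T / real T" using True by auto
    also have "\<dots> \<le> (b0 + b1 * real T) * real T / real t"
      using True less b by (intro divide_left_mono mult_nonneg_nonneg) auto
    also have "\<dots> \<le> C / real t" using C2 less by (intro divide_right_mono) auto
    finally show ?thesis unfolding C_def .
  next
    case False
    define s where "s = t - L"
    have s1: "s \<ge> 1" and ts: "t = s + L" using False TL unfolding s_def by auto
    have sl: "s < t" using s1 ts L by linarith
    have IH: "D s \<le> C / real s" using less.IH[OF sl s1] unfolding C_def .
    have "D t \<le> (1 - \<gamma>) * D s + a / real s" using rec[OF s1] ts by simp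
    also have "\<dots> \<le> (1 - \<gamma>) * (C / real s) + a / real s" using IH g by (intro add_right_mono mult_left_mono) auto
    also have "\<dots> = ((1 - \<gamma>) * C + a) / real s" by (simp add: add_divide_distrib)
    also have "\<dots> \<le> C / real t"
    proof -
      have tT: "real t \<ge> 2 * real L / \<gamma>" using False T2 by linarith
      then have "\<gamma> * real t \<ge> 2 * real L" using g by (simp add: field_simps)
      then have "\<gamma> * real t - real L \<ge> \<gamma> * real t / 2" by simp
      have Cn: "C \<ge> 0" using C1 a g by (smt (verit) divide_nonneg_pos)
      have "a * real t = (2 * a / \<gamma>) * (\<gamma> * real t / 2)" using g by (simp add: field_simps)
      also have "\<dots> \<le> C * (\<gamma> * real t / 2)" using C1 g by (intro mult_right_mono) auto
      also have "\<dots> \<le> C * (\<gamma> * real t - real L)" using \<open>\<gamma> * real t - real L \<ge> \<gamma> * real t / 2\<close> Cn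
        by (intro mult_left_mono) auto
      finally have "((1 - \<gamma>) * C + a) * real t \<le> C * real s" using ts by (simp add: algebra_simps)
      then show ?thesis using s1 sl by (simp add: divide_simps)
    qed
    finally show ?thesis unfolding C_def .
  qed
qed



definition cdelta :: "nat \<Rightarrow> nat \<Rightarrow> real" where "cdelta n r = (1 / real n) ^ (r * n)"
definition ceta :: "nat \<Rightarrow> nat \<Rightarrow> real" where "ceta n r = cdelta n r / (real n)\<^sup>2"
definition cgamma :: "nat \<Rightarrow> nat \<Rightarrow> real" where "cgamma n r = ceta n r ^ (r * n)"
definition cc :: "nat \<Rightarrow> nat \<Rightarrow> real \<Rightarrow> real" where "cc n r K = 2 * K / cdelta n r"

locale ps =
  fixes n :: nat and E :: "nat \<Rightarrow> (nat \<times> nat) set" and xs :: "nat \<Rightarrow> nat \<Rightarrow> real"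
    and K :: real and r :: nat
  assumes n1: "n \<ge> 1" and r0: "r > 0"
    and sc: "\<And>k. strongly_connected n (\<Union>t\<in>{r*k+1..r*(k+1)}. E t)"
    and bnd: "\<And>i \<tau>. i < n \<Longrightarrow> \<tau> \<ge> 1 \<Longrightarrow> \<bar>xs i \<tau>\<bar> \<le> K"
begin

abbreviation Y where "Y t \<equiv> fst (yv n E xs t)"
abbreviation V where "V t \<equiv> snd (yv n E xs t)"

lemma Y1: "Y (Suc 0) = (\<lambda>i. xs i 1)" and V1: "V (Suc 0) = (\<lambda>i. 1)" by simp_all

lemma YSuc: "t \<ge> 1 \<Longrightarrow> Y (Suc t) i = push n E t (Y t) i + zavg xs i (Suc t) - zavg xs i t"
  by (cases t) (auto simp: Let_def)

lemma VSuc: "t \<ge> 1 \<Longrightarrow> V (Suc t) i = push n E t (V t) i"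
  by (cases t) (auto simp: Let_def)

lemma mu_Suc: "mu n E xs (Suc t) i = push n E t (Y t) i"
  by (simp add: mu_def)

lemma K0: "0 \<le> K" using bnd[of 0 1] n1 by force

lemma push_ge:
  assumes "\<And>j. j < n \<Longrightarrow> 0 \<le> f j" "i < n" "l < n" "l = i \<or> (l \<noteq> i \<and> (l, i) \<in> E t)"
  shows "f l / real n \<le> push n E t f i"
proof -
  have "f l / real n = 1 / real n * f l" by simp
  also have "\<dots> \<le> Am n E t i l * f l" using Am_lb[of i n l E t] assms by (intro mult_right_mono) auto
  also have "\<dots> \<le> (\<Sum>j<n. Am n E t i j * f j)"
    using assms by (intro member_le_sum[of l "{..<n}" "\<lambda>j. Am n E t i j * f j"] mult_nonneg_nonneg Am_nonneg) auto
  finally show ?thesis using push_Am[OF assms(2)] by simp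
qed

lemma push_nonneg:
  assumes "\<And>j. j < n \<Longrightarrow> 0 \<le> f j" "i < n"
  shows "0 \<le> push n E t f i"
  unfolding push_Am[OF assms(2)] using assms(1) by (intro sum_nonneg mult_nonneg_nonneg Am_nonneg) auto

lemma V_nonneg: "t \<ge> 1 \<Longrightarrow> i < n \<Longrightarrow> 0 \<le> V t i"
proof (induction t arbitrary: i rule: dec_induct)
  case base then show ?case by simp
next
  case (step m) then show ?case by (simp add: VSuc push_nonneg)
qed

lemma V_sum: "t \<ge> 1 \<Longrightarrow> (\<Sum>i<n. V t i) = real n"
proof (induction t rule: dec_induct)
  case base then show ?case by simp
next
  case (step m) then show ?case by (simp add: VSuc sum_push)
qed

lemma V_le: "t \<ge> 1 \<Longrightarrow> i < n \<Longrightarrow> V t i \<le> real n"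
  using member_le_sum[of i "{..<n}" "V t"] V_nonneg V_sum by auto

lemma V_pow: "i < n \<Longrightarrow> (1 / real n) ^ k \<le> V (Suc k) i"
proof (induction k arbitrary: i)
  case 0 then show ?case by simp
next
  case (Suc k)
  have "(1 / real n) ^ Suc k = (1 / real n) ^ k / real n" by simp
  also have "\<dots> \<le> V (Suc k) i / real n" using Suc n1 by (intro divide_right_mono) auto
  also have "\<dots> \<le> push n E (Suc k) (V (Suc k)) i"
    by (rule push_ge) (use Suc V_nonneg in auto)
  finally show ?case by (simp add: VSuc)
qed

lemma V_lb: assumes "t \<ge> 1" "i < n" shows "cdelta n r \<le> V t i"
proof (cases "t \<le> r * n")
  case True
  obtain k where k: "t = Suc k" using assms by (cases t) auto
  have "cdelta n r \<le> (1 / real n) ^ k" unfolding cdelta_def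
    using True k n1 by (intro power_decreasing) auto
  also have "\<dots> \<le> V t i" using V_pow[OF assms(2)] k by simp
  finally show ?thesis .
next
  case False
  define s where "s = t - r * n"
  have s1: "s \<ge> 1" and ts: "t = s + r * n" using False unfolding s_def by auto
  obtain j where j: "j < n" "V s j \<ge> 1"
  proof (rule ccontr)
    assume "\<not> ?thesis"
    then have "\<forall>j<n. V s j < 1" using that by force
    then have "(\<Sum>j<n. V s j) < (\<Sum>j<n. 1)" using n1 by (intro sum_strict_mono) (auto simp: lessThan_empty_iff)
    then show False using V_sum[OF s1] by simp
  qed
  have "(1 / real n) ^ (r * n) * V s j \<le> V (s + r * n) i"
  proof (rule reach[OF r0 sc _ _ s1 _ _ _ assms(2) j(1)])
    show "0 < 1 / real n" "1 / real n \<le> 1" using n1 by auto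
    show "0 \<le> V \<tau> i" if "\<tau> \<ge> s" "i < n" for \<tau> i using V_nonneg that s1 by auto
    show "1 / real n * V \<tau> i \<le> V (Suc \<tau>) i" if "\<tau> \<ge> s" "i < n" for \<tau> i
      using push_ge[of "V \<tau>" i i] that s1 V_nonneg VSuc by auto
    show "1 / real n * V \<tau> l \<le> V (Suc \<tau>) i" if "\<tau> \<ge> s" "i < n" "l < n" "l \<noteq> i" "(l, i) \<in> E \<tau>" for \<tau> i l
      using push_ge[of "V \<tau>" i l] that s1 V_nonneg VSuc by auto
  qed
  moreover have "(1 / real n) ^ (r * n) \<le> (1 / real n) ^ (r * n) * V s j" using j by simp
  ultimately show ?thesis unfolding cdelta_def using ts by simp
qed

lemma V_pos: "t \<ge> 1 \<Longrightarrow> i < n \<Longrightarrow> 0 < V t i"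
proof -
  assume a: "t \<ge> 1" "i < n"
  have "0 < cdelta n r" unfolding cdelta_def using n1 by simp
  then show ?thesis using V_lb[OF a] by linarith
qed

lemma zavg1: "zavg xs i 1 = xs i 1" by (simp add: zavg_def)

lemma Y_sum: "t \<ge> 1 \<Longrightarrow> (\<Sum>i<n. Y t i) = (\<Sum>i<n. zavg xs i t)"
proof (induction t rule: dec_induct)
  case base then show ?case by (simp add: zavg_def)
next
  case (step m) then show ?case by (simp add: YSuc sum_push sum.distrib sum_subtractf)
qed

end


lemma spread_le:
  fixes f :: "nat \<Rightarrow> real"
  assumes "n \<ge> 1" "\<And>i k. i < n \<Longrightarrow> k < n \<Longrightarrow> f i - f k \<le> b"
  shows "Max (f ` {..<n}) - Min (f ` {..<n}) \<le> b"
proof -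
  have ne: "f ` {..<n} \<noteq> {}" using assms(1) by (auto simp: lessThan_empty_iff)
  obtain i where i: "i < n" "Max (f ` {..<n}) = f i" using Max_in[OF _ ne] by auto
  obtain k where k: "k < n" "Min (f ` {..<n}) = f k" using Min_in[OF _ ne] by auto
  show ?thesis using assms(2)[OF i(1) k(1)] i k by simp
qed

lemma Max_ge': "i < n \<Longrightarrow> (f::nat \<Rightarrow> real) i \<le> Max (f ` {..<n})" by (intro Max_ge) auto
lemma Min_le': "i < n \<Longrightarrow> Min (f ` {..<n}) \<le> (f::nat \<Rightarrow> real) i" by (intro Min_le) auto

context ps begin

definition w where "w t i = Y t i / V t i"
definition rr where "rr t i = mu n E xs t i / V t i"
definition p where "p t i j = Am n E t i j * V t j / V (Suc t) i"
definition ee where "ee t i = (zavg xs i t - zavg xs i (t - 1)) / V t i"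
definition D where "D t = Max (w t ` {..<n}) - Min (w t ` {..<n})"

lemma delta_pos: "0 < cdelta n r" and delta_le1: "cdelta n r \<le> 1"
  unfolding cdelta_def using n1 by (auto intro!: power_le_one)

lemma cc_nonneg: "0 \<le> cc n r K" unfolding cc_def using delta_pos K0 by simp

lemma rr_conv: assumes "t \<ge> 1" "i < n" shows "rr (Suc t) i = (\<Sum>j<n. p t i j * w t j)"
proof -
  have "(\<Sum>j<n. p t i j * w t j) = (\<Sum>j<n. Am n E t i j * Y t j / V (Suc t) i)"
    unfolding p_def w_def
  proof (intro sum.cong refl)
    fix j assume "j \<in> {..<n}"
    then have "V t j \<noteq> 0" using V_pos[OF assms(1)] by force
    then show "Am n E t i j * V t j / V (Suc t) i * (Y t j / V t j) = Am n E t i j * Y t j / V (Suc t) i"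
      by (simp add: field_simps)
  qed
  also have "\<dots> = push n E t (Y t) i / V (Suc t) i" by (simp add: push_Am[OF assms(2)] sum_divide_distrib)
  finally show ?thesis unfolding rr_def mu_Suc by simp
qed

lemma p_sum: assumes "t \<ge> 1" "i < n" shows "(\<Sum>j<n. p t i j) = 1"
proof -
  have "(\<Sum>j<n. p t i j) = push n E t (V t) i / V (Suc t) i"
    unfolding p_def by (simp add: push_Am[OF assms(2)] sum_divide_distrib)
  also have "\<dots> = 1" using VSuc[OF assms(1)] V_pos[of "Suc t" i] assms by simp
  finally show ?thesis .
qed

lemma p_nonneg: "t \<ge> 1 \<Longrightarrow> i < n \<Longrightarrow> j < n \<Longrightarrow> 0 \<le> p t i j"
  unfolding p_def using V_nonneg[of t j] V_nonneg[of "Suc t" i] Am_nonneg by simp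

lemma p_lb: assumes "t \<ge> 1" "i < n" "l < n" "l = i \<or> (l \<noteq> i \<and> (l, i) \<in> E t)"
  shows "ceta n r \<le> p t i l"
proof -
  have a: "1 / real n \<le> Am n E t i l" by (rule Am_lb) (use assms in auto)
  have v: "cdelta n r \<le> V t l" using V_lb assms by auto
  have "1 / real n * cdelta n r \<le> Am n E t i l * V t l"
    using a v delta_pos Am_nonneg by (intro mult_mono) auto
  moreover have "0 < V (Suc t) i" "V (Suc t) i \<le> real n" using V_pos V_le assms by auto
  ultimately have "1 / real n * cdelta n r / real n \<le> Am n E t i l * V t l / V (Suc t) i"
    using delta_pos n1 Am_nonneg V_nonneg assms by (intro frac_le mult_nonneg_nonneg) auto
  then show ?thesis unfolding ceta_def p_def by (simp add: power2_eq_square)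
qed

lemma eta_pos: "0 < ceta n r" and eta_le1: "ceta n r \<le> 1"
proof -
  show "0 < ceta n r" unfolding ceta_def using delta_pos n1 by simp
  have "real n ^ 2 \<ge> 1" using n1 by simp
  then show "ceta n r \<le> 1" unfolding ceta_def using delta_le1 delta_pos
    by (simp add: divide_le_eq)
qed

lemma w_split: "t \<ge> 1 \<Longrightarrow> w (Suc t) i = rr (Suc t) i + ee (Suc t) i"
  unfolding w_def rr_def ee_def by (simp add: YSuc mu_Suc add_divide_distrib diff_divide_distrib)

lemma dz: assumes "t \<ge> 1" "i < n"
  shows "\<bar>zavg xs i (Suc t) - zavg xs i t\<bar> \<le> 2 * K / real (Suc t)"
proof -
  define S where "S = (\<Sum>\<tau>=1..t. xs i \<tau>)"
  have S1: "(\<Sum>\<tau>=1..Suc t. xs i \<tau>) = S + xs i (Suc t)" unfolding S_def by simp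
  have Sb: "\<bar>S\<bar> \<le> real t * K"
  proof -
    have "\<bar>S\<bar> \<le> (\<Sum>\<tau>=1..t. \<bar>xs i \<tau>\<bar>)" unfolding S_def by (rule sum_abs)
    also have "\<dots> \<le> (\<Sum>\<tau>=1..t. K)" using bnd assms by (intro sum_mono) auto
    finally show ?thesis by simp
  qed
  have eq: "zavg xs i (Suc t) - zavg xs i t = (real t * xs i (Suc t) - S) / (real t * (real t + 1))"
    unfolding zavg_def S1 S_def[symmetric] using assms by (simp add: field_simps)
  have "\<bar>real t * xs i (Suc t) - S\<bar> \<le> real t * K + real t * K"
  proof -
    have "\<bar>real t * xs i (Suc t)\<bar> \<le> real t * K" using bnd[of i "Suc t"] assms by (simp add: abs_mult mult_left_mono)
    then show ?thesis using Sb by linarith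
  qed
  then have "\<bar>real t * xs i (Suc t) - S\<bar> / (real t * (real t + 1)) \<le> (2 * real t * K) / (real t * (real t + 1))"
    by (intro divide_right_mono) (auto simp: algebra_simps)
  then have "\<bar>zavg xs i (Suc t) - zavg xs i t\<bar> \<le> (2 * real t * K) / (real t * (real t + 1))"
    unfolding eq using assms by (simp add: abs_divide)
  also have "\<dots> = (real t * (2 * K)) / (real t * (real t + 1))" by (simp add: algebra_simps)
  also have "\<dots> = (2 * K) / (real t + 1)" using assms by (intro mult_divide_mult_cancel_left) auto
  also have "\<dots> = 2 * K / real (Suc t)" by simp
  finally show ?thesis .
qed

lemma ee_bd: assumes "t \<ge> 1" "i < n" shows "\<bar>ee (Suc t) i\<bar> \<le> cc n r K / real (Suc t)"
proof -
  have v: "cdelta n r \<le> V (Suc t) i" using V_lb assms by auto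
  have "\<bar>ee (Suc t) i\<bar> = \<bar>zavg xs i (Suc t) - zavg xs i t\<bar> / V (Suc t) i"
    unfolding ee_def using V_pos[of "Suc t" i] assms by (simp add: abs_divide)
  also have "\<dots> \<le> (2 * K / real (Suc t)) / cdelta n r"
    using dz[OF assms] v delta_pos by (intro frac_le) auto
  also have "\<dots> = cc n r K / real (Suc t)" unfolding cc_def by simp
  finally show ?thesis .
qed

lemma w_bd0: "i < n \<Longrightarrow> \<bar>w (Suc k) i\<bar> \<le> K + cc n r K * real (Suc k)"
proof (induction k arbitrary: i)
  case 0 then show ?case using bnd[of i 1] cc_nonneg by (simp add: w_def)
next
  case (Suc k)
  define t where "t = Suc k"
  have t1: "t \<ge> 1" unfolding t_def by simp
  have IH: "\<And>j. j < n \<Longrightarrow> \<bar>w t j\<bar> \<le> K + cc n r K * real t" using Suc.IH unfolding t_def by simp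
  have "\<bar>rr (Suc t) i\<bar> \<le> (\<Sum>j<n. p t i j * (K + cc n r K * real t))"
  proof -
    have "\<bar>rr (Suc t) i\<bar> \<le> (\<Sum>j<n. \<bar>p t i j * w t j\<bar>)" unfolding rr_conv[OF t1 Suc.prems] by (rule sum_abs)
    also have "\<dots> \<le> (\<Sum>j<n. p t i j * (K + cc n r K * real t))"
      using IH p_nonneg[OF t1 Suc.prems] by (intro sum_mono) (auto simp: abs_mult intro!: mult_left_mono)
    finally show ?thesis .
  qed
  also have "\<dots> = K + cc n r K * real t" using p_sum[OF t1 Suc.prems] by (simp add: sum_distrib_right[symmetric])
  finally have a: "\<bar>rr (Suc t) i\<bar> \<le> K + cc n r K * real t" .
  have "cc n r K / real (Suc t) \<le> cc n r K" using cc_nonneg by (simp add: divide_le_eq mult_le_cancel_left1)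
  then have b: "\<bar>ee (Suc t) i\<bar> \<le> cc n r K" using ee_bd[OF t1 Suc.prems] by linarith
  have "\<bar>w (Suc t) i\<bar> \<le> K + cc n r K * real t + cc n r K" using a b w_split[OF t1, of i] by linarith
  then show ?case unfolding t_def by (simp add: algebra_simps)
qed

lemma w_bd: "t \<ge> 1 \<Longrightarrow> i < n \<Longrightarrow> \<bar>w t i\<bar> \<le> K + cc n r K * real t"
  using w_bd0[of i "t - 1"] by simp

lemma D_bd: "t \<ge> 1 \<Longrightarrow> D t \<le> 2 * K + 2 * cc n r K * real t"
  unfolding D_def
proof (rule spread_le[OF n1])
  fix i k assume "t \<ge> 1" "i < n" "k < n"
  then show "w t i - w t k \<le> 2 * K + 2 * cc n r K * real t" using w_bd[of t i] w_bd[of t k] by auto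
qed

end


context ps begin

lemma p_aff: assumes "t \<ge> 1" "i < n"
  shows "(\<Sum>j<n. p t i j * (a * w t j + c0)) = a * rr (Suc t) i + c0"
proof -
  have "(\<Sum>j<n. p t i j * (a * w t j + c0)) = a * (\<Sum>j<n. p t i j * w t j) + c0 * (\<Sum>j<n. p t i j)"
    by (simp add: algebra_simps sum.distrib sum_distrib_left)
  then show ?thesis using rr_conv[OF assms] p_sum[OF assms] by simp
qed

lemma envelope: assumes s1: "s \<ge> 1"
  shows "D (s + r * n) \<le> (1 - cgamma n r) * D s + 2 * real (r * n) * cc n r K / real s"
proof -
  define L where "L = r * n"
  define m where "m = Min (w s ` {..<n})"
  define M where "M = Max (w s ` {..<n})"
  define \<beta> where "\<beta> = cc n r K / real (Suc s)"
  define \<gamma> where "\<gamma> = cgamma n r"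
  have ne: "w s ` {..<n} \<noteq> {}" using n1 by (auto simp: lessThan_empty_iff)
  obtain j0 where j0: "j0 < n" "w s j0 = M" using Max_in[OF _ ne] unfolding M_def by auto
  obtain k0 where k0: "k0 < n" "w s k0 = m" using Min_in[OF _ ne] unfolding m_def by auto
  have mle: "m \<le> w s i" "w s i \<le> M" if "i < n" for i unfolding m_def M_def using that by (auto intro: Min_le' Max_ge')
  have ee_le: "\<bar>ee (Suc \<tau>) i\<bar> \<le> \<beta>" if "\<tau> \<ge> s" "i < n" for \<tau> i
  proof -
    have "\<bar>ee (Suc \<tau>) i\<bar> \<le> cc n r K / real (Suc \<tau>)" using ee_bd that s1 by auto
    also have "\<dots> \<le> \<beta>" unfolding \<beta>_def using that cc_nonneg by (intro divide_left_mono) auto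
    finally show ?thesis .
  qed
  have eta: "0 < ceta n r" "ceta n r \<le> 1" by (rule eta_pos, rule eta_le1)
  have \<gamma>0: "0 \<le> \<gamma>" unfolding \<gamma>_def cgamma_def using eta by simp
  have pnn: "\<And>\<tau> i j. \<tau> \<ge> s \<Longrightarrow> i < n \<Longrightarrow> j < n \<Longrightarrow> 0 \<le> p \<tau> i j" using p_nonneg s1 by auto
  have plb: "\<And>\<tau> i l. \<tau> \<ge> s \<Longrightarrow> i < n \<Longrightarrow> l < n \<Longrightarrow> l = i \<or> (l \<noteq> i \<and> (l, i) \<in> E \<tau>) \<Longrightarrow> ceta n r \<le> p \<tau> i l"
    using p_lb s1 by auto
  define g where "g \<tau> i = w \<tau> i - m + real (\<tau> - s) * \<beta>" for \<tau> i
  define h where "h \<tau> i = M - w \<tau> i + real (\<tau> - s) * \<beta>" for \<tau> i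
  have sup_g: "(\<Sum>j<n. p \<tau> i j * g \<tau> j) \<le> g (Suc \<tau>) i" if "\<tau> \<ge> s" "i < n" for \<tau> i
  proof -
    have t1: "\<tau> \<ge> 1" using that s1 by simp
    have "(\<Sum>j<n. p \<tau> i j * g \<tau> j) = (\<Sum>j<n. p \<tau> i j * (1 * w \<tau> j + (real (\<tau> - s) * \<beta> - m)))"
      unfolding g_def by (simp add: algebra_simps)
    also have "\<dots> = rr (Suc \<tau>) i + (real (\<tau> - s) * \<beta> - m)" using p_aff[OF t1 that(2), of 1] by simp
    also have "\<dots> \<le> g (Suc \<tau>) i"
      unfolding g_def using w_split[OF t1, of i] ee_le[OF that] that by (simp add: Suc_diff_le algebra_simps)
    finally show ?thesis .
  qed
  have sup_h: "(\<Sum>j<n. p \<tau> i j * h \<tau> j) \<le> h (Suc \<tau>) i" if "\<tau> \<ge> s" "i < n" for \<tau> i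
  proof -
    have t1: "\<tau> \<ge> 1" using that s1 by simp
    have "(\<Sum>j<n. p \<tau> i j * h \<tau> j) = (\<Sum>j<n. p \<tau> i j * ((-1) * w \<tau> j + (real (\<tau> - s) * \<beta> + M)))"
      unfolding h_def by (simp add: algebra_simps)
    also have "\<dots> = - rr (Suc \<tau>) i + (real (\<tau> - s) * \<beta> + M)" using p_aff[OF t1 that(2), of "-1"] by simp
    also have "\<dots> \<le> h (Suc \<tau>) i"
      unfolding h_def using w_split[OF t1, of i] ee_le[OF that] that by (simp add: Suc_diff_le algebra_simps)
    finally show ?thesis .
  qed
  have lo: "m + \<gamma> * (M - m) - real L * \<beta> \<le> w (s + L) i" if "i < n" for i
  proof -
    have g0: "\<And>i. i < n \<Longrightarrow> 0 \<le> g s i" using mle by (auto simp: g_def)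
    have "ceta n r ^ (r * n) * g s j0 \<le> g (s + r * n) i"
      by (rule supersol[OF r0 sc eta s1 sup_g pnn plb g0 that j0(1)])
    then show ?thesis unfolding g_def \<gamma>_def cgamma_def L_def using j0 by simp
  qed
  have hi: "w (s + L) i \<le> M - \<gamma> * (M - m) + real L * \<beta>" if "i < n" for i
  proof -
    have h0: "\<And>i. i < n \<Longrightarrow> 0 \<le> h s i" using mle by (auto simp: h_def)
    have "ceta n r ^ (r * n) * h s k0 \<le> h (s + r * n) i"
      by (rule supersol[OF r0 sc eta s1 sup_h pnn plb h0 that k0(1)])
    then show ?thesis unfolding h_def \<gamma>_def cgamma_def L_def using k0 by simp
  qed
  have Ds: "D s = M - m" unfolding D_def M_def m_def ..
  have Mm: "M - m \<ge> 0" using mle[OF j0(1)] j0 k0 mle[OF k0(1)] by simp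
  have \<beta>le: "\<beta> \<le> cc n r K / real s" unfolding \<beta>_def using s1 cc_nonneg by (intro divide_left_mono) auto
  have "D (s + L) \<le> (1 - \<gamma>) * (M - m) + 2 * real L * \<beta>"
    unfolding D_def
  proof (rule spread_le[OF n1])
    fix i k assume "i < n" "k < n"
    with hi[of i] lo[of k] have "w (s + L) i - w (s + L) k \<le> (1 - 2 * \<gamma>) * (M - m) + 2 * real L * \<beta>"
      by (simp add: algebra_simps)
    also have "\<dots> \<le> (1 - \<gamma>) * (M - m) + 2 * real L * \<beta>"
      using mult_nonneg_nonneg[OF \<gamma>0 Mm] by (simp add: algebra_simps)
    finally show "w (s + L) i - w (s + L) k \<le> (1 - \<gamma>) * (M - m) + 2 * real L * \<beta>" .
  qed
  also have "\<dots> \<le> (1 - \<gamma>) * (M - m) + 2 * real L * (cc n r K / real s)"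
    using \<beta>le by (intro add_left_mono mult_left_mono) auto
  finally show ?thesis unfolding Ds L_def \<gamma>_def by simp
qed

end


definition Cfin :: "nat \<Rightarrow> nat \<Rightarrow> real \<Rightarrow> real" where
  "Cfin n r K = rateC (cgamma n r) (r * n) (2 * real (r * n) * cc n r K) (2 * K) (2 * cc n r K) + 2 * cc n r K"

context ps begin

lemma gamma_pos: "0 < cgamma n r" and gamma_le1: "cgamma n r \<le> 1"
  unfolding cgamma_def using eta_pos eta_le1 by (auto intro: power_le_one)

lemma D_rate: "t \<ge> 1 \<Longrightarrow> D t \<le> rateC (cgamma n r) (r * n) (2 * real (r * n) * cc n r K) (2 * K) (2 * cc n r K) / real t"
proof (rule rate[OF gamma_pos gamma_le1])
  show "0 \<le> 2 * real (r * n) * cc n r K" "0 \<le> 2 * K" "0 \<le> 2 * cc n r K" using cc_nonneg K0 by auto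
  show "D (s + r * n) \<le> (1 - cgamma n r) * D s + 2 * real (r * n) * cc n r K / real s" if "s \<ge> 1" for s
    using envelope[OF that] .
  show "D t \<le> 2 * K + 2 * cc n r K * real t" if "t \<ge> 1" for t using D_bd[OF that] .
  show "r * n \<ge> 1" using r0 n1 by simp
qed

lemma rr_spread: assumes "t \<ge> 2"
  shows "Max (rr t ` {..<n}) - Min (rr t ` {..<n}) \<le> Cfin n r K / real t"
proof (rule spread_le[OF n1])
  fix i k assume ik: "i < n" "k < n"
  obtain t' where t': "t = Suc t'" "t' \<ge> 1" using assms by (cases t) auto
  have e: "\<bar>ee t j\<bar> \<le> cc n r K / real t" if "j < n" for j using ee_bd[OF t'(2) that] t' by simp
  have rw: "rr t j = w t j - ee t j" for j using w_split[OF t'(2), of j] t' by simp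
  have "w t i - w t k \<le> D t" unfolding D_def using ik by (smt (verit) Max_ge' Min_le')
  also have "\<dots> \<le> rateC (cgamma n r) (r * n) (2 * real (r * n) * cc n r K) (2 * K) (2 * cc n r K) / real t"
    using D_rate assms by simp
  finally have "rr t i - rr t k \<le> rateC (cgamma n r) (r * n) (2 * real (r * n) * cc n r K) (2 * K) (2 * cc n r K) / real t + 2 * (cc n r K / real t)"
    using rw[of i] rw[of k] e[OF ik(1)] e[OF ik(2)] by linarith
  then show "rr t i - rr t k \<le> Cfin n r K / real t" unfolding Cfin_def by (simp add: add_divide_distrib)
qed

lemma rr_avg: assumes "t \<ge> 2" "i < n"
  shows "\<bar>rr t i - (\<Sum>j<n. zavg xs j (t - 1)) / real n\<bar> \<le> Max (rr t ` {..<n}) - Min (rr t ` {..<n})"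
proof -
  obtain t' where t': "t = Suc t'" "t' \<ge> 1" using assms by (cases t) auto
  define Mx where "Mx = Max (rr t ` {..<n})"
  define mn where "mn = Min (rr t ` {..<n})"
  have b: "mn \<le> rr t j" "rr t j \<le> Mx" if "j < n" for j unfolding Mx_def mn_def using that by (auto intro: Max_ge' Min_le')
  have "(\<Sum>j<n. zavg xs j (t - 1)) = (\<Sum>j<n. Y t' j)" using Y_sum[OF t'(2)] t' by simp
  also have "\<dots> = (\<Sum>j<n. mu n E xs t j)" using t' by (simp add: mu_Suc sum_push)
  also have "\<dots> = (\<Sum>j<n. V t j * rr t j)"
  proof (intro sum.cong refl)
    fix j assume "j \<in> {..<n}"
    then have "V t j \<noteq> 0" using V_pos[of t j] assms by force
    then show "mu n E xs t j = V t j * rr t j" by (simp add: rr_def)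
  qed
  finally have S: "(\<Sum>j<n. zavg xs j (t - 1)) = (\<Sum>j<n. V t j * rr t j)" .
  have "(\<Sum>j<n. V t j * rr t j) \<le> (\<Sum>j<n. V t j * Mx)"
    using b V_nonneg assms by (intro sum_mono mult_left_mono) auto
  also have "\<dots> = real n * Mx" using V_sum assms by (simp add: sum_distrib_right[symmetric])
  finally have u: "(\<Sum>j<n. zavg xs j (t - 1)) / real n \<le> Mx" using S n1 by (simp add: divide_le_eq mult.commute)
  have "real n * mn = (\<Sum>j<n. V t j * mn)" using V_sum assms by (simp add: sum_distrib_right[symmetric])
  also have "\<dots> \<le> (\<Sum>j<n. V t j * rr t j)"
    using b V_nonneg assms by (intro sum_mono mult_left_mono) auto
  finally have l: "mn \<le> (\<Sum>j<n. zavg xs j (t - 1)) / real n" using S n1 by (simp add: le_divide_eq mult.commute)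
  show ?thesis using u l b[OF assms(2)] unfolding Mx_def[symmetric] mn_def[symmetric] by linarith
qed

lemma rr_lim: assumes lim: "\<And>j. j < n \<Longrightarrow> (\<lambda>t. zavg xs j t) \<longlonglongrightarrow> xb j" and i: "i < n"
  shows "(\<lambda>t. rr t i) \<longlonglongrightarrow> (\<Sum>j<n. xb j) / real n"
proof -
  define g where "g t = (\<Sum>j<n. zavg xs j (t - 1)) / real n" for t
  have "(\<lambda>t. g (Suc t)) \<longlonglongrightarrow> (\<Sum>j<n. xb j) / real n"
    unfolding g_def using n1 by (auto intro!: tendsto_divide tendsto_sum lim)
  then have g: "g \<longlonglongrightarrow> (\<Sum>j<n. xb j) / real n" by (rule LIMSEQ_imp_Suc)
  have "(\<lambda>t. rr t i - g t) \<longlonglongrightarrow> 0"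
  proof (rule Lim_null_comparison)
    show "eventually (\<lambda>t. norm (rr t i - g t) \<le> Cfin n r K / real t) sequentially"
      unfolding eventually_sequentially
      using rr_avg[OF _ i] rr_spread unfolding g_def by (intro exI[of _ 2]) (force simp: real_norm_def)
    show "(\<lambda>t. Cfin n r K / real t) \<longlonglongrightarrow> 0" by (rule tendsto_divide_0[OF tendsto_const]) (rule filterlim_at_top_imp_at_infinity[OF filterlim_real_sequentially])
  qed
  from tendsto_add[OF this g] show ?thesis by simp
qed

end


lemma yv_Suc: "t \<ge> 1 \<Longrightarrow> yv n E xs (Suc t) =
   ((\<lambda>i. push n E t (fst (yv n E xs t)) i + zavg xs i (Suc t) - zavg xs i t), (\<lambda>i. push n E t (snd (yv n E xs t)) i))"
  by (cases t) (auto simp: Let_def)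

lemma meas_push:
  assumes "\<And>j. j < n \<Longrightarrow> (\<lambda>\<omega>. f \<omega> j) \<in> borel_measurable M" "i < n"
  shows "(\<lambda>\<omega>. push n E t (f \<omega>) i) \<in> borel_measurable M"
proof -
  have "(\<lambda>\<omega>. \<Sum>j\<in>in_nbrs n E t i. f \<omega> j / (1 + real (outdeg n E t j))) \<in> borel_measurable M"
    using assms in_nbrs_sub[of n E t i] by (intro borel_measurable_sum borel_measurable_divide) auto
  then show ?thesis unfolding push_def using assms by measurable
qed

lemma meas_yv:
  fixes x :: "nat \<Rightarrow> nat \<Rightarrow> 'a \<Rightarrow> real"
  assumes rv: "\<And>i \<tau>. i < n \<Longrightarrow> \<tau> \<ge> 1 \<Longrightarrow> x i \<tau> \<in> borel_measurable M"
  shows "i < n \<Longrightarrow> (\<lambda>\<omega>. fst (yv n E (\<lambda>j \<tau>. x j \<tau> \<omega>) t) i) \<in> borel_measurable M \<and>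
                  (\<lambda>\<omega>. snd (yv n E (\<lambda>j \<tau>. x j \<tau> \<omega>) t) i) \<in> borel_measurable M"
proof (induction t arbitrary: i)
  case 0 then show ?case by simp
next
  case (Suc t)
  have z: "(\<lambda>\<omega>. zavg (\<lambda>j \<tau>. x j \<tau> \<omega>) i s) \<in> borel_measurable M" for s
    unfolding zavg_def using rv Suc.prems by (intro borel_measurable_divide borel_measurable_sum) auto
  show ?case
  proof (cases "t = 0")
    case True
    then show ?thesis using rv Suc.prems by simp
  next
    case False
    then have t1: "t \<ge> 1" by simp
    have "(\<lambda>\<omega>. push n E t (fst (yv n E (\<lambda>j \<tau>. x j \<tau> \<omega>) t)) i) \<in> borel_measurable M"
      by (rule meas_push) (use Suc.IH Suc.prems in auto)
    moreover have "(\<lambda>\<omega>. push n E t (snd (yv n E (\<lambda>j \<tau>. x j \<tau> \<omega>) t)) i) \<in> borel_measurable M"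
      by (rule meas_push) (use Suc.IH Suc.prems in auto)
    ultimately show ?thesis using z unfolding yv_Suc[OF t1] by simp
  qed
qed

lemma meas_ratio:
  fixes x :: "nat \<Rightarrow> nat \<Rightarrow> 'a \<Rightarrow> real"
  assumes rv: "\<And>i \<tau>. i < n \<Longrightarrow> \<tau> \<ge> 1 \<Longrightarrow> x i \<tau> \<in> borel_measurable M" and i: "i < n"
  shows "(\<lambda>\<omega>. mu n E (\<lambda>j \<tau>. x j \<tau> \<omega>) t i / vw n E (\<lambda>j \<tau>. x j \<tau> \<omega>) t i) \<in> borel_measurable M"
proof -
  have "(\<lambda>\<omega>. mu n E (\<lambda>j \<tau>. x j \<tau> \<omega>) t i) \<in> borel_measurable M"
    unfolding mu_def by (rule meas_push) (use meas_yv[OF rv] i in auto)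
  moreover have "(\<lambda>\<omega>. vw n E (\<lambda>j \<tau>. x j \<tau> \<omega>) t i) \<in> borel_measurable M"
    unfolding vw_def using meas_yv[OF rv] i by auto
  ultimately show ?thesis by (rule borel_measurable_divide)
qed

theorem theorem2:
  fixes M :: "'a measure" and n :: nat and E :: "nat \<Rightarrow> (nat \<times> nat) set"
    and x :: "nat \<Rightarrow> nat \<Rightarrow> 'a \<Rightarrow> real" and K :: real
  assumes "prob_space M"
    and "n > 1"
    and "\<And>t. E t \<subseteq> {..<n} \<times> {..<n}"
    and "\<And>i. i < n \<Longrightarrow> prob_space.indep_vars M (\<lambda>_. borel) (x i) {1..}"
    and "\<And>i \<tau>. i < n \<Longrightarrow> \<tau> \<ge> 1 \<Longrightarrow> distr M borel (x i \<tau>) = distr M borel (x i 1)"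
    and "\<And>i \<tau>. i < n \<Longrightarrow> \<tau> \<ge> 1 \<Longrightarrow> AE \<omega> in M. \<bar>x i \<tau> \<omega>\<bar> \<le> K"
    and "\<And>t. t \<ge> 1 \<Longrightarrow> compatible_weights n (E t)"
    and "repeatedly_jointly_strongly_connected n E"
  shows "(AE \<omega> in M. \<forall>i<n.
           ((\<lambda>t. mu n E (\<lambda>j \<tau>. x j \<tau> \<omega>) t i / vw n E (\<lambda>j \<tau>. x j \<tau> \<omega>) t i)
             \<longlongrightarrow> (\<Sum>j<n. prob_space.expectation M (x j 1)) / real n) sequentially)
    \<and> (\<exists>C::real. ((\<lambda>t. measure M {\<omega> \<in> space M.
            Max ((\<lambda>i. mu n E (\<lambda>j \<tau>. x j \<tau> \<omega>) t i / vw n E (\<lambda>j \<tau>. x j \<tau> \<omega>) t i) ` {..<n})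
          - Min ((\<lambda>i. mu n E (\<lambda>j \<tau>. x j \<tau> \<omega>) t i / vw n E (\<lambda>j \<tau>. x j \<tau> \<omega>) t i) ` {..<n})
            \<le> C / real t}) \<longlongrightarrow> 1) sequentially)"
proof -
  note P = assms(1)
  interpret prob_space M by (rule P)
  obtain r where r0: "r > 0" and sc: "\<And>k. strongly_connected n (\<Union>t\<in>{r*k+1..r*(k+1)}. E t)"
    using assms(8) unfolding repeatedly_jointly_strongly_connected_def by blast
  have n1: "n \<ge> 1" using assms(2) by simp
  have rv: "x i \<tau> \<in> borel_measurable M" if "i < n" "\<tau> \<ge> 1" for i \<tau>
    using assms(4)[OF that(1)] that(2) unfolding indep_vars_def by auto
  have AEb: "AE \<omega> in M. \<forall>i. \<forall>\<tau>. i < n \<longrightarrow> \<tau> \<ge> 1 \<longrightarrow> \<bar>x i \<tau> \<omega>\<bar> \<le> K"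
  proof (subst AE_all_countable, intro allI, subst AE_all_countable, intro allI)
    fix i \<tau> :: nat
    show "AE \<omega> in M. i < n \<longrightarrow> \<tau> \<ge> 1 \<longrightarrow> \<bar>x i \<tau> \<omega>\<bar> \<le> K"
    proof (cases "i < n \<and> \<tau> \<ge> 1")
      case True
      then show ?thesis using assms(6)[of i \<tau>] by (auto elim: AE_mp)
    qed auto
  qed
  have AEs: "AE \<omega> in M. \<forall>j. j < n \<longrightarrow> ((\<lambda>t. zavg (\<lambda>j \<tau>. x j \<tau> \<omega>) j t) \<longlongrightarrow> expectation (x j 1)) sequentially"
  proof (subst AE_all_countable, intro allI)
    fix j :: nat
    show "AE \<omega> in M. j < n \<longrightarrow> ((\<lambda>t. zavg (\<lambda>j \<tau>. x j \<tau> \<omega>) j t) \<longlongrightarrow> expectation (x j 1)) sequentially"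
    proof (cases "j < n")
      case True
      have "AE \<omega> in M. ((\<lambda>t. (\<Sum>\<tau>=1..t. x j \<tau> \<omega>) / real t) \<longlongrightarrow> expectation (x j 1)) sequentially"
        by (rule slln_bounded[OF P assms(4)[OF True] assms(5)[OF True] assms(6)[OF True]])
      then show ?thesis unfolding zavg_def by auto
    qed auto
  qed
  have part1: "AE \<omega> in M. \<forall>i<n.
           ((\<lambda>t. mu n E (\<lambda>j \<tau>. x j \<tau> \<omega>) t i / vw n E (\<lambda>j \<tau>. x j \<tau> \<omega>) t i)
             \<longlongrightarrow> (\<Sum>j<n. expectation (x j 1)) / real n) sequentially"
    using AEb AEs
  proof eventually_elim
    case (elim \<omega>)
    interpret ps n E "\<lambda>j \<tau>. x j \<tau> \<omega>" K r
      by unfold_locales (use n1 r0 sc elim(1) in auto)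
    show ?case
    proof (intro allI impI)
      fix i assume i: "i < n"
      have "(\<lambda>t. rr t i) \<longlonglongrightarrow> (\<Sum>j<n. expectation (x j 1)) / real n"
        by (rule rr_lim[OF _ i]) (use elim(2) in auto)
      then show "((\<lambda>t. mu n E (\<lambda>j \<tau>. x j \<tau> \<omega>) t i / vw n E (\<lambda>j \<tau>. x j \<tau> \<omega>) t i)
             \<longlongrightarrow> (\<Sum>j<n. expectation (x j 1)) / real n) sequentially"
        unfolding rr_def vw_def .
    qed
  qed
  define C where "C = Cfin n r K"
  define F where "F t \<omega> = Max ((\<lambda>i. mu n E (\<lambda>j \<tau>. x j \<tau> \<omega>) t i / vw n E (\<lambda>j \<tau>. x j \<tau> \<omega>) t i) ` {..<n})
          - Min ((\<lambda>i. mu n E (\<lambda>j \<tau>. x j \<tau> \<omega>) t i / vw n E (\<lambda>j \<tau>. x j \<tau> \<omega>) t i) ` {..<n})" for t \<omega>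
  have Fm: "F t \<in> borel_measurable M" for t
  proof -
    have a: "(\<lambda>\<omega>. Max ((\<lambda>i. mu n E (\<lambda>j \<tau>. x j \<tau> \<omega>) t i / vw n E (\<lambda>j \<tau>. x j \<tau> \<omega>) t i) ` {..<n})) \<in> borel_measurable M"
      by (rule borel_measurable_Max) (use meas_ratio[OF rv] in auto)
    have b: "(\<lambda>\<omega>. Min ((\<lambda>i. mu n E (\<lambda>j \<tau>. x j \<tau> \<omega>) t i / vw n E (\<lambda>j \<tau>. x j \<tau> \<omega>) t i) ` {..<n})) \<in> borel_measurable M"
      by (rule borel_measurable_Min) (use meas_ratio[OF rv] in auto)
    show ?thesis unfolding F_def using a b by (rule borel_measurable_diff)
  qed
  have ev1: "eventually (\<lambda>t. measure M {\<omega> \<in> space M. F t \<omega> \<le> C / real t} = 1) sequentially"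
    unfolding eventually_sequentially
  proof (intro exI[of _ 2] allI impI)
    fix t :: nat assume t: "t \<ge> 2"
    have S: "{\<omega> \<in> space M. F t \<omega> \<le> C / real t} \<in> sets M" using Fm[of t] by measurable
    have "AE \<omega> in M. F t \<omega> \<le> C / real t"
      using AEb
    proof eventually_elim
      case (elim \<omega>)
      interpret ps n E "\<lambda>j \<tau>. x j \<tau> \<omega>" K r
        by unfold_locales (use n1 r0 sc elim(1) in auto)
      show ?case using rr_spread[OF t] unfolding F_def C_def rr_def vw_def .
    qed
    then have "AE \<omega> in M. \<omega> \<in> {\<omega> \<in> space M. F t \<omega> \<le> C / real t}" by (auto simp: AE_iff_null)
    then show "measure M {\<omega> \<in> space M. F t \<omega> \<le> C / real t} = 1" using prob_eq_1[OF S] by simp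
  qed
  have part2: "((\<lambda>t. measure M {\<omega> \<in> space M. F t \<omega> \<le> C / real t}) \<longlongrightarrow> 1) sequentially"
    by (rule tendsto_eventually[OF ev1])
  show ?thesis using part1 part2 unfolding F_def by blast
qed

end
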